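(* Let $N\ge1$ and $\Gamma_N=\{0,\dots,N-1\}^2\subset\mathbb{Z}^2$, and take $c^+=N-1$, $c^-=0$ so that $d^+_0$ and $d^-_0$ are the main diagonals of $\Gamma_N$. Then, with all functions restricted to $\Gamma_N$: (i) for $N=1$, $\{H^+_{\geq0}\}$ is a basis of $\mathcal{H}^{\Gamma_N}_\mathbb{Z}$; (ii) for $N$ even, $\{H^+_{\geq i},H^+_{\leq -i},H^-_{\geq i},H^-_{\leq -i}\}_{i=1,\dots,N-1}$ is a basis of $\mathcal{H}^{\Gamma_N}_\mathbb{Z}$; (iii) for $N\ge3$ odd, $\{H^+_{\geq0},H^+_{\leq-1},H^-_{\geq1},H^-_{\leq-1}\}\cup\{H^+_{\geq i},H^+_{\leq -i},H^-_{\geq i},H^-_{\leq -i}\}_{i=2,\dots,N-1}$ is a basis of $\mathcal{H}^{\Gamma_N}_\mathbb{Z}$.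
   Context: Adjacency $\sim$ is nearest-neighbor adjacency in $\mathbb{Z}^2$. For finite $\Gamma$, $(\Delta_\Gamma f)(v)=\sum_{w\in\Gamma,\,w\sim v}f(w)-4f(v)$, $\partial\Gamma$ is the set of vertices of $\Gamma$ with a neighbor outside $\Gamma$, and $\mathcal{H}^\Gamma_\mathbb{Z}$ is the module of $H:\Gamma\to\mathbb{Z}$ with $(\Delta_\Gamma H)(v)=0$ for all $v\in\Gamma\setminus\partial\Gamma$. A function $H:\mathbb{Z}^2\to\mathbb{Z}$ is harmonic on $\mathbb{Z}^2$ if $4H(v)=\sum_{w\sim v}H(w)$ for all $v$. Diagonals: $d^+_i=\{(x,y)\in\mathbb{Z}^2: x+y=i+c^+\}$, $d^-_i=\{(x,y): x-y=i+c^-\}$. $H^+_{\geq i}$ denotes any integer-valued harmonic function on $\mathbb{Z}^2$ that vanishes on $d^+_k$ for all $k<i$ and takes values in $\{+1,-1\}$ on $d^+_i$ (its values on each diagonal $d^+_k$, $k>i$, are determined by one freely chosen value on that diagonal, any choice allowed); $H^+_{\leq i}$ is defined likewise but vanishing on $d^+_k$ for all $k>i$; $H^-_{\geq i},H^-_{\leq i}$ likewise with $d^-$ in place of $d^+$. *)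

theory Defs
  imports Main
begin

type_synonym vtx = "int \<times> int"

definition adj :: "vtx \<Rightarrow> vtx \<Rightarrow> bool" where
  "adj v w \<longleftrightarrow> \<bar>fst v - fst w\<bar> + \<bar>snd v - snd w\<bar> = 1"

definition lap_on :: "vtx set \<Rightarrow> (vtx \<Rightarrow> int) \<Rightarrow> vtx \<Rightarrow> int" where
  "lap_on G f v = (\<Sum>w\<in>{w\<in>G. adj w v}. f w) - 4 * f v"

definition bdry :: "vtx set \<Rightarrow> vtx set" where
  "bdry G = {v\<in>G. \<exists>w. adj w v \<and> w \<notin> G}"

text \<open>The Z-module H^Gamma_Z; functions are compared on G only.\<close>
definition harm_module :: "vtx set \<Rightarrow> (vtx \<Rightarrow> int) set" where
  "harm_module G = {H. \<forall>v\<in>G - bdry G. lap_on G H v = 0}"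

definition harmonic_Z2 :: "(vtx \<Rightarrow> int) \<Rightarrow> bool" where
  "harmonic_Z2 H \<longleftrightarrow> (\<forall>v. 4 * H v = (\<Sum>w\<in>{w. adj w v}. H w))"

definition dplus :: "int \<Rightarrow> int \<Rightarrow> vtx set" where
  "dplus c i = {(x, y). x + y = i + c}"

definition dminus :: "int \<Rightarrow> int \<Rightarrow> vtx set" where
  "dminus c i = {(x, y). x - y = i + c}"

definition is_H_ge :: "(int \<Rightarrow> vtx set) \<Rightarrow> int \<Rightarrow> (vtx \<Rightarrow> int) \<Rightarrow> bool" where
  "is_H_ge d i H \<longleftrightarrow> harmonic_Z2 H \<and> (\<forall>k<i. \<forall>v\<in>d k. H v = 0) \<and> (\<forall>v\<in>d i. H v \<in> {1, -1})"

definition is_H_le :: "(int \<Rightarrow> vtx set) \<Rightarrow> int \<Rightarrow> (vtx \<Rightarrow> int) \<Rightarrow> bool" where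
  "is_H_le d i H \<longleftrightarrow> harmonic_Z2 H \<and> (\<forall>k>i. \<forall>v\<in>d k. H v = 0) \<and> (\<forall>v\<in>d i. H v \<in> {1, -1})"

definition Gamma :: "int \<Rightarrow> vtx set" where
  "Gamma N = {0..N-1} \<times> {0..N-1}"

datatype kind = PlusGe | PlusLe | MinusGe | MinusLe

definition is_H :: "int \<Rightarrow> kind \<Rightarrow> int \<Rightarrow> (vtx \<Rightarrow> int) \<Rightarrow> bool" where
  "is_H N k i H = (case k of
      PlusGe \<Rightarrow> is_H_ge (dplus (N - 1)) i H
    | PlusLe \<Rightarrow> is_H_le (dplus (N - 1)) i H
    | MinusGe \<Rightarrow> is_H_ge (dminus 0) i H
    | MinusLe \<Rightarrow> is_H_le (dminus 0) i H)"

definition is_Z_basis :: "vtx set \<Rightarrow> 'i set \<Rightarrow> ('i \<Rightarrow> vtx \<Rightarrow> int) \<Rightarrow> bool" where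
  "is_Z_basis G I b \<longleftrightarrow> finite I \<and> (\<forall>j\<in>I. b j \<in> harm_module G) \<and>
     (\<forall>H\<in>harm_module G. \<exists>!c. (\<forall>j. j \<notin> I \<longrightarrow> c j = 0) \<and>
        (\<forall>v\<in>G. H v = (\<Sum>j\<in>I. c j * b j v)))"

definition idx_one :: "(kind \<times> int) set" where
  "idx_one = {(PlusGe, 0)}"

definition idx_even :: "int \<Rightarrow> (kind \<times> int) set" where
  "idx_even N = (\<Union>i\<in>{1..N-1}. {(PlusGe, i), (PlusLe, -i), (MinusGe, i), (MinusLe, -i)})"

definition idx_odd :: "int \<Rightarrow> (kind \<times> int) set" where
  "idx_odd N = {(PlusGe, 0), (PlusLe, -1), (MinusGe, 1), (MinusLe, -1)} \<union>
     (\<Union>i\<in>{2..N-1}. {(PlusGe, i), (PlusLe, -i), (MinusGe, i), (MinusLe, -i)})"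

end

theory Submission
  imports Defs
begin


lemma abs1: "\<bar>a\<bar> + \<bar>b\<bar> = (1::int) \<longleftrightarrow> (a=1\<and>b=0)\<or>(a=-1\<and>b=0)\<or>(a=0\<and>b=1)\<or>(a=0\<and>b=-1)"
  by arith

lemma adj_set: "{w. adj w (x,y)} = {(x+1,y),(x-1,y),(x,y+1),(x,y-1)}"
proof (intro set_eqI)
  fix w :: vtx
  obtain a b where w: "w = (a,b)" by (cases w)
  show "w \<in> {w. adj w (x,y)} \<longleftrightarrow> w \<in> {(x+1,y),(x-1,y),(x,y+1),(x,y-1)}"
    unfolding w adj_def fst_conv snd_conv mem_Collect_eq abs1 by auto
qed

lemma harm_eq:
  assumes "H \<in> harm_module (Gamma N)" "1 \<le> x" "x \<le> N-2" "1 \<le> y" "y \<le> N-2"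
  shows "H(x+1,y)+H(x-1,y)+H(x,y+1)+H(x,y-1) = 4*H(x,y)"
proof -
  have sub: "{(x+1,y),(x-1,y),(x,y+1),(x,y-1)} \<subseteq> Gamma N"
    using assms(2-5) unfolding Gamma_def by simp
  have set: "{w\<in>Gamma N. adj w (x,y)} = {(x+1,y),(x-1,y),(x,y+1),(x,y-1)}"
  proof -
    have "{w\<in>Gamma N. adj w (x,y)} = {w. adj w (x,y)} \<inter> Gamma N" by blast
    also have "\<dots> = {(x+1,y),(x-1,y),(x,y+1),(x,y-1)}" unfolding adj_set using sub by blast
    finally show ?thesis .
  qed
  have "(x,y) \<in> Gamma N" using assms unfolding Gamma_def by auto
  moreover have "(x,y) \<notin> bdry (Gamma N)"
  proof
    assume "(x,y) \<in> bdry (Gamma N)"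
    then obtain w where "adj w (x,y)" "w \<notin> Gamma N" unfolding bdry_def by blast
    thus False using sub unfolding adj_set[symmetric] by blast
  qed
  ultimately have "lap_on (Gamma N) H (x,y) = 0" using assms(1) unfolding harm_module_def by auto
  then show ?thesis unfolding lap_on_def set by simp
qed

lemma harmZ2_mod: "harmonic_Z2 H \<Longrightarrow> H \<in> harm_module G"
proof -
  assume h: "harmonic_Z2 H"
  { fix v assume v: "v \<in> G - bdry G"
    have "{w\<in>G. adj w v} = {w. adj w v}" using v unfolding bdry_def by auto
    hence "lap_on G H v = 0" using h unfolding lap_on_def harmonic_Z2_def by (cases v) simp }
  thus ?thesis unfolding harm_module_def by auto
qed

lemma harm_lin: "H \<in> harm_module G \<Longrightarrow> K \<in> harm_module G \<Longrightarrow> (\<lambda>v. H v - a * K v) \<in> harm_module G"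
proof -
  assume a1: "H \<in> harm_module G" and a2: "K \<in> harm_module G"
  { fix v assume v: "v \<in> G - bdry G"
    have "lap_on G (\<lambda>v. H v - a * K v) v = lap_on G H v - a * lap_on G K v"
      unfolding lap_on_def by (simp add: sum_subtractf sum_distrib_left[symmetric] algebra_simps)
    hence "lap_on G (\<lambda>v. H v - a * K v) v = 0" using a1 a2 v unfolding harm_module_def by simp }
  thus ?thesis unfolding harm_module_def by auto
qed



lemma exists_min:
  fixes r :: "'i \<Rightarrow> int"
  assumes "finite S" "S \<noteq> {}"
  obtains j0 where "j0 \<in> S" "\<And>j. j \<in> S \<Longrightarrow> r j0 \<le> r j"
proof -
  have "Min (r ` S) \<in> r ` S" using assms by simp
  then obtain j0 where "j0 \<in> S" "r j0 = Min (r ` S)" by auto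
  moreover have "\<And>j. j \<in> S \<Longrightarrow> Min (r ` S) \<le> r j" using assms by simp
  ultimately show ?thesis using that by metis
qed

lemma tri_basis:
  fixes G :: "vtx set" and I :: "'i set" and b :: "'i \<Rightarrow> vtx \<Rightarrow> int"
    and p :: "'i \<Rightarrow> vtx" and r :: "'i \<Rightarrow> int"
  assumes fin: "finite I" and inj: "inj_on r I"
    and bM: "\<forall>j\<in>I. b j \<in> harm_module G"
    and pG: "\<forall>j\<in>I. p j \<in> G"
    and piv: "\<forall>j\<in>I. b j (p j) \<in> {1, -1}"
    and tri: "\<forall>j\<in>I. \<forall>j'\<in>I. r j' < r j \<longrightarrow> b j (p j') = 0"
    and det: "\<forall>H\<in>harm_module G. (\<forall>j\<in>I. H (p j) = 0) \<longrightarrow> (\<forall>v\<in>G. H v = 0)"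
  shows "is_Z_basis G I b"
proof -
  have sq: "b j (p j) * b j (p j) = 1" if "j \<in> I" for j using piv that by auto
  have ex: "\<forall>m. card {j\<in>I. m \<le> r j} = k \<longrightarrow> (\<forall>H\<in>harm_module G. (\<forall>j\<in>I. r j < m \<longrightarrow> H (p j) = 0) \<longrightarrow>
     (\<exists>c. (\<forall>j. j \<notin> I \<longrightarrow> c j = 0) \<and> (\<forall>v\<in>G. H v = (\<Sum>j\<in>I. c j * b j v))))" for k
  proof (induction k)
    case 0
    show ?case
    proof (intro allI impI ballI)
      fix m H assume c0: "card {j\<in>I. m \<le> r j} = 0" and H: "H \<in> harm_module G"
        and z: "\<forall>j\<in>I. r j < m \<longrightarrow> H (p j) = 0"
      have "{j\<in>I. m \<le> r j} = {}" using c0 fin by simp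
      hence "\<forall>j\<in>I. H (p j) = 0" using z by force
      hence "\<forall>v\<in>G. H v = 0" using det H by blast
      thus "\<exists>c. (\<forall>j. j \<notin> I \<longrightarrow> c j = 0) \<and> (\<forall>v\<in>G. H v = (\<Sum>j\<in>I. c j * b j v))"
        by (intro exI[of _ "\<lambda>_. 0"]) simp
    qed
  next
    case (Suc k)
    show ?case
    proof (intro allI impI ballI)
      fix m H assume ck: "card {j\<in>I. m \<le> r j} = Suc k" and H: "H \<in> harm_module G"
        and z: "\<forall>j\<in>I. r j < m \<longrightarrow> H (p j) = 0"
      define S where "S = {j\<in>I. m \<le> r j}"
      have finS: "finite S" using fin unfolding S_def by simp
      have neS: "S \<noteq> {}"
      proof
        assume "S = {}"
        hence "{j\<in>I. m \<le> r j} = {}" unfolding S_def .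
        thus False using ck by (metis card.empty nat.distinct(1))
      qed
      obtain j0 where j0S: "j0 \<in> S" and j0min: "\<And>j. j \<in> S \<Longrightarrow> r j0 \<le> r j"
        using exists_min[OF finS neS] by blast
      have j0I: "j0 \<in> I" using j0S unfolding S_def by simp
      define m' where "m' = r j0 + 1"
      have S': "{j\<in>I. m' \<le> r j} = S - {j0}"
      proof (intro set_eqI iffI)
        fix j assume "j \<in> {j\<in>I. m' \<le> r j}"
        thus "j \<in> S - {j0}" using j0S unfolding S_def m'_def by auto
      next
        fix j assume a: "j \<in> S - {j0}"
        hence "r j0 \<le> r j" using j0min by auto
        moreover have "r j \<noteq> r j0" using a j0I inj unfolding S_def inj_on_def by auto
        ultimately show "j \<in> {j\<in>I. m' \<le> r j}" using a unfolding S_def m'_def by auto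
      qed
      have ck': "card {j\<in>I. m' \<le> r j} = k" using ck j0S finS unfolding S' S_def by simp
      define a where "a = H (p j0) * b j0 (p j0)"
      define H' where "H' = (\<lambda>v. H v - a * b j0 v)"
      have H'M: "H' \<in> harm_module G" unfolding H'_def using harm_lin H bM j0I by blast
      have z': "\<forall>j\<in>I. r j < m' \<longrightarrow> H' (p j) = 0"
      proof (intro ballI impI)
        fix j assume jI: "j \<in> I" and rj: "r j < m'"
        show "H' (p j) = 0"
        proof (cases "r j < m")
          case True
          hence "H (p j) = 0" using z jI by simp
          moreover have "b j0 (p j) = 0" using tri j0I jI True j0S unfolding S_def by force
          ultimately show ?thesis unfolding H'_def by simp
        next
          case False
          hence "j \<in> S" using jI unfolding S_def by simp
          hence "r j = r j0" using j0min rj unfolding m'_def by force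
          hence "j = j0" using inj jI j0I unfolding inj_on_def by blast
          thus ?thesis unfolding H'_def a_def using sq[OF j0I]
            by (simp add: algebra_simps)
        qed
      qed
      obtain c' where c'0: "\<forall>j. j \<notin> I \<longrightarrow> c' j = 0"
        and c'r: "\<forall>v\<in>G. H' v = (\<Sum>j\<in>I. c' j * b j v)"
        using Suc.IH ck' H'M z' by blast
      define c where "c = c'(j0 := c' j0 + a)"
      have "\<forall>j. j \<notin> I \<longrightarrow> c j = 0" using c'0 j0I unfolding c_def by auto
      moreover have "\<forall>v\<in>G. H v = (\<Sum>j\<in>I. c j * b j v)"
      proof
        fix v assume v: "v \<in> G"
        have e: "c j * b j v = c' j * b j v + (if j = j0 then a * b j0 v else 0)" for j
          unfolding c_def by (simp add: algebra_simps)
        have "(\<Sum>j\<in>I. c j * b j v) = (\<Sum>j\<in>I. c' j * b j v) + a * b j0 v"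
          unfolding e sum.distrib using fin j0I by simp
        also have "\<dots> = H v"
        proof -
          have "H v - a * b j0 v = (\<Sum>j\<in>I. c' j * b j v)" using c'r v unfolding H'_def by blast
          thus ?thesis by linarith
        qed
        finally show "H v = (\<Sum>j\<in>I. c j * b j v)" by simp
      qed
      ultimately show "\<exists>c. (\<forall>j. j \<notin> I \<longrightarrow> c j = 0) \<and> (\<forall>v\<in>G. H v = (\<Sum>j\<in>I. c j * b j v))"
        by blast
    qed
  qed
  have uniq: "c1 = c2" if c10: "\<forall>j. j \<notin> I \<longrightarrow> c1 j = 0" and c20: "\<forall>j. j \<notin> I \<longrightarrow> c2 j = 0"
    and r1: "\<forall>v\<in>G. H v = (\<Sum>j\<in>I. c1 j * b j v)" and r2: "\<forall>v\<in>G. H v = (\<Sum>j\<in>I. c2 j * b j v)"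
    for c1 c2 H
  proof (rule ccontr)
    assume ne: "c1 \<noteq> c2"
    define d where "d = (\<lambda>j. c1 j - c2 j)"
    define S where "S = {j\<in>I. d j \<noteq> 0}"
    have finS: "finite S" using fin unfolding S_def by simp
    have neS: "S \<noteq> {}"
    proof
      assume "S = {}"
      hence "\<forall>j. c1 j = c2 j" using c10 c20 unfolding S_def d_def by force
      thus False using ne by auto
    qed
    obtain j0 where j0S: "j0 \<in> S" and j0min: "\<And>j. j \<in> S \<Longrightarrow> r j0 \<le> r j"
      using exists_min[OF finS neS] by blast
    have j0I: "j0 \<in> I" using j0S unfolding S_def by simp
    have pv: "p j0 \<in> G" using pG j0I by simp
    have "(\<Sum>j\<in>I. d j * b j (p j0)) = 0"
      using r1 r2 pv unfolding d_def by (simp add: sum_subtractf left_diff_distrib)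
    moreover have "(\<Sum>j\<in>I. d j * b j (p j0)) = d j0 * b j0 (p j0)"
    proof (rule sum.mono_neutral_right[OF fin, of "{j0}", simplified])
      show "j0 \<in> I" by (rule j0I)
      show "\<forall>j\<in>I - {j0}. d j * b j (p j0) = 0"
      proof
        fix j assume j: "j \<in> I - {j0}"
        show "d j * b j (p j0) = 0"
        proof (cases "d j = 0")
          case False
          hence "j \<in> S" using j unfolding S_def by simp
          hence "r j0 \<le> r j" by (rule j0min)
          moreover have "r j \<noteq> r j0" using j j0I inj unfolding inj_on_def by auto
          ultimately have "r j0 < r j" by simp
          hence "b j (p j0) = 0" using tri j j0I by auto
          thus ?thesis by simp
        qed simp
      qed
    qed
    moreover have "d j0 * b j0 (p j0) \<noteq> 0" using j0S piv j0I unfolding S_def by auto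
    ultimately show False by simp
  qed
  show ?thesis
    unfolding is_Z_basis_def
  proof (intro conjI ballI)
    show "finite I" by (rule fin)
    show "\<And>j. j \<in> I \<Longrightarrow> b j \<in> harm_module G" using bM by blast
    fix H assume H: "H \<in> harm_module G"
    define m0 where "m0 = Min (insert 0 (r ` I))"
    have m0: "\<forall>j\<in>I. r j < m0 \<longrightarrow> H (p j) = 0"
    proof (intro ballI impI)
      fix j assume j: "j \<in> I" and lt: "r j < m0"
      have "m0 \<le> r j" unfolding m0_def by (rule Min_le) (use fin j in auto)
      thus "H (p j) = 0" using lt by simp
    qed
    obtain c where "(\<forall>j. j \<notin> I \<longrightarrow> c j = 0) \<and> (\<forall>v\<in>G. H v = (\<Sum>j\<in>I. c j * b j v))"
      using ex[of "card {j\<in>I. m0 \<le> r j}", rule_format, OF refl H m0[rule_format]] by blast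
    thus "\<exists>!c. (\<forall>j. j \<notin> I \<longrightarrow> c j = 0) \<and> (\<forall>v\<in>G. H v = (\<Sum>j\<in>I. c j * b j v))"
      using uniq by blast
  qed
qed



definition q :: "int \<Rightarrow> int \<Rightarrow> vtx" where
  "q N i = (i + (N - i) div 2, (N - i) div 2)"

lemma div2_bounds: "2 * ((a::int) div 2) \<le> a \<and> a \<le> 2 * (a div 2) + 1"
proof -
  have "a = 2 * (a div 2) + a mod 2" by simp
  moreover have "0 \<le> a mod 2" "a mod 2 < 2" by simp_all
  ultimately show ?thesis by linarith
qed

lemma q_diff: "fst (q N i) - snd (q N i) = i"
  unfolding q_def by simp

lemma q_sum_bounds: "N - 1 \<le> fst (q N i) + snd (q N i) \<and> fst (q N i) + snd (q N i) \<le> N"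
  unfolding q_def using div2_bounds[of "N - i"] by simp

lemma q0_sum: "fst (q N 0) + snd (q N 0) = (if even N then 1 else 0) + (N - 1)"
proof -
  have e: "N = 2 * (N div 2) + N mod 2" by simp
  have s: "fst (q N 0) + snd (q N 0) = 2 * (N div 2)" unfolding q_def by simp
  show ?thesis
  proof (cases "even N")
    case True
    hence "N mod 2 = 0" by (simp add: even_iff_mod_2_eq_zero)
    moreover have "(if even N then 1 else 0) + (N - 1) = N" using True by simp
    ultimately show ?thesis using e s by linarith
  next
    case False
    hence "N mod 2 = 1" by (simp add: odd_iff_mod_2_eq_one)
    moreover have "(if even N then 1 else 0) + (N - 1) = N - 1" using False by simp
    ultimately show ?thesis using e s by linarith
  qed
qed

lemma q_in: "N \<ge> 1 \<Longrightarrow> -(N-1) \<le> i \<Longrightarrow> i \<le> N-1 \<Longrightarrow> q N i \<in> Gamma N"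
proof -
  assume a: "N \<ge> 1" "-(N-1) \<le> i" "i \<le> N-1"
  define c where "c = (N - i) div 2"
  have b: "2 * c \<le> N - i" "N - i \<le> 2 * c + 1" using div2_bounds[of "N - i"] unfolding c_def by auto
  have "0 \<le> i + c \<and> i + c \<le> N - 1 \<and> 0 \<le> c \<and> c \<le> N - 1" using a b by presburger
  thus ?thesis unfolding q_def Gamma_def c_def by simp
qed

lemma q_inv: "x + y = N - 1 \<or> x + y = N \<Longrightarrow> q N (x - y) = (x, y)"
proof -
  assume a: "x + y = N - 1 \<or> x + y = N"
  have "(N - (x - y)) div 2 = y"
  proof (cases "x + y = N")
    case True
    hence "N - (x - y) = 2 * y" by simp
    thus ?thesis by simp
  next
    case False
    hence "N - (x - y) = 2 * y + 1" using a by simp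
    thus ?thesis by simp
  qed
  thus ?thesis unfolding q_def by simp
qed

definition Zl :: "(vtx \<Rightarrow> int) \<Rightarrow> int \<Rightarrow> int \<Rightarrow> bool" where
  "Zl H N s \<longleftrightarrow> (\<forall>x y. 0 \<le> x \<longrightarrow> x \<le> N-1 \<longrightarrow> 0 \<le> y \<longrightarrow> y \<le> N-1 \<longrightarrow> x + y = s \<longrightarrow> H (x,y) = 0)"

lemma harm_eq2:
  assumes "H \<in> harm_module (Gamma N)" "1 \<le> x" "x \<le> N-2" "1 \<le> y" "y \<le> N-2"
    "a = x+1" "b = x-1" "c = y+1" "d = y-1"
  shows "H(a,y)+H(b,y)+H(x,c)+H(x,d) = 4*H(x,y)"
  using harm_eq[OF assms(1-5)] assms(6-9) by simp

lemma up_step: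
  assumes H: "H \<in> harm_module (Gamma N)" and s: "N \<le> s" "s \<le> 2*N-2"
    and z1: "Zl H N (s-1)" and z2: "Zl H N (s-2)" and e: "H (N-1, s-N+1) = 0"
  shows "Zl H N s"
proof -
  have main: "\<forall>x. N - 1 - int n = x \<longrightarrow> s - N + 1 \<le> x \<longrightarrow> H (x, s - x) = 0" for n :: nat
  proof (induction n)
    case 0
    show ?case
    proof (intro allI impI)
      fix x assume "N - 1 - int 0 = x"
      hence "(x, s - x) = (N - 1, s - N + 1)" by auto
      thus "H (x, s - x) = 0" using e by metis
    qed
  next
    case (Suc n)
    show ?case
    proof (intro allI impI)
      fix x assume x: "N - 1 - int (Suc n) = x" "s - N + 1 \<le> x"
      have he: "H(x+1, s-x-1) + H(x-1, s-x-1) + H(x, s-x) + H(x, s-x-2) = 4*H(x, s-x-1)"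
        by (rule harm_eq2[OF H]) (use x s in auto)
      have a1: "H(x+1, s-x-1) = 0" using Suc.IH x by (auto simp: algebra_simps)
      have a2: "H(x-1, s-x-1) = 0" using z2 x s unfolding Zl_def by auto
      have a3: "H(x, s-x-2) = 0" using z2 x s unfolding Zl_def by auto
      have a4: "H(x, s-x-1) = 0" using z1 x s unfolding Zl_def by auto
      show "H (x, s - x) = 0" using he a1 a2 a3 a4 by simp
    qed
  qed
  show ?thesis unfolding Zl_def
  proof (intro allI impI)
    fix x y assume b: "0 \<le> x" "x \<le> N-1" "0 \<le> y" "y \<le> N-1" "x + y = s"
    have "H (x, s - x) = 0" using main[of "nat (N - 1 - x)"] b by auto
    moreover have "s - x = y" using b by simp
    ultimately show "H (x, y) = 0" by simp
  qed
qed

lemma down_step: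
  assumes H: "H \<in> harm_module (Gamma N)" and s: "0 \<le> s" "s \<le> N-2"
    and z1: "Zl H N (s+1)" and z2: "Zl H N (s+2)" and e: "H (0, s) = 0"
  shows "Zl H N s"
proof -
  have main: "\<forall>x. int n = x \<longrightarrow> x \<le> s \<longrightarrow> H (x, s - x) = 0" for n :: nat
  proof (induction n)
    case 0
    show ?case using e by auto
  next
    case (Suc n)
    show ?case
    proof (intro allI impI)
      fix x assume x: "int (Suc n) = x" "x \<le> s"
      have he: "H(x+1, s-x+1) + H(x-1, s-x+1) + H(x, s-x+2) + H(x, s-x) = 4*H(x, s-x+1)"
        by (rule harm_eq2[OF H]) (use x s in auto)
      have a1: "H(x-1, s-x+1) = 0" using Suc.IH x by (auto simp: algebra_simps)
      have a2: "H(x+1, s-x+1) = 0" using z2 x s unfolding Zl_def by auto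
      have a3: "H(x, s-x+2) = 0" using z2 x s unfolding Zl_def by auto
      have a4: "H(x, s-x+1) = 0" using z1 x s unfolding Zl_def by auto
      show "H (x, s - x) = 0" using he a1 a2 a3 a4 by simp
    qed
  qed
  show ?thesis unfolding Zl_def
  proof (intro allI impI)
    fix x y assume b: "0 \<le> x" "x \<le> N-1" "0 \<le> y" "y \<le> N-1" "x + y = s"
    have "H (x, s - x) = 0" using main[of "nat x"] b by auto
    moreover have "s - x = y" using b by simp
    ultimately show "H (x, y) = 0" by simp
  qed
qed

lemma vanish:
  assumes N: "N \<ge> 1" and H: "H \<in> harm_module (Gamma N)"
    and zq: "\<forall>i. -(N-1) \<le> i \<longrightarrow> i \<le> N-1 \<longrightarrow> H (q N i) = 0"
    and zu: "\<forall>i. 2 \<le> i \<longrightarrow> i \<le> N-1 \<longrightarrow> H (N-1, i) = 0"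
    and zd: "\<forall>i. 0 \<le> i \<longrightarrow> i \<le> N-2 \<longrightarrow> H (0, i) = 0"
  shows "\<forall>v\<in>Gamma N. H v = 0"
proof -
  have z0': "Zl H N t" if t: "t = N - 1 \<or> t = N" for t
    unfolding Zl_def
  proof (intro allI impI)
    fix x y assume b: "0 \<le> x" "x \<le> N-1" "0 \<le> y" "y \<le> N-1" "x + y = t"
    have "H (q N (x - y)) = 0" using zq b by auto
    thus "H (x,y) = 0" using q_inv[of x y N] b t by auto
  qed
  have z0: "Zl H N (N-1)" "Zl H N N" using z0' by auto
  have up: "Zl H N (N - 1 + int k) \<and> Zl H N (N + int k)" for k :: nat
  proof (induction k)
    case 0 then show ?case using z0 by simp
  next
    case (Suc k)
    have "Zl H N (N + int k + 1)"
    proof (cases "N + int k + 1 \<le> 2*N-2")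
      case True
      have e: "H (N-1, N + int k + 1 - N + 1) = 0" using zu True by auto
      have eq1: "N + int k + 1 - 1 = N + int k" by simp
      have eq2: "N + int k + 1 - 2 = N - 1 + int k" by simp
      have z1: "Zl H N (N + int k + 1 - 1)" unfolding eq1 using Suc.IH by simp
      have z2: "Zl H N (N + int k + 1 - 2)" unfolding eq2 using Suc.IH by simp
      show ?thesis by (rule up_step[OF H _ True z1 z2 e]) simp
    next
      case False
      thus ?thesis unfolding Zl_def by auto
    qed
    moreover have e1: "N - 1 + int (Suc k) = N + int k" "N + int (Suc k) = N + int k + 1" by simp_all
    ultimately show ?case using Suc.IH unfolding e1 by blast
  qed
  have down: "Zl H N (N - 1 - int k) \<and> Zl H N (N - int k)" for k :: nat
  proof (induction k)
    case 0 then show ?case using z0 by simp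
  next
    case (Suc k)
    have "Zl H N (N - 1 - int k - 1)"
    proof (cases "0 \<le> N - 1 - int k - 1")
      case True
      have e: "H (0, N - 1 - int k - 1) = 0" using zd True by auto
      have eq1: "N - 1 - int k - 1 + 1 = N - 1 - int k" by simp
      have eq2: "N - 1 - int k - 1 + 2 = N - int k" by simp
      have z1: "Zl H N (N - 1 - int k - 1 + 1)" unfolding eq1 using Suc.IH by simp
      have z2: "Zl H N (N - 1 - int k - 1 + 2)" unfolding eq2 using Suc.IH by simp
      show ?thesis by (rule down_step[OF H True _ z1 z2 e]) linarith
    next
      case False
      thus ?thesis unfolding Zl_def by auto
    qed
    moreover have e1: "N - 1 - int (Suc k) = N - 1 - int k - 1" "N - int (Suc k) = N - 1 - int k" by simp_all
    ultimately show ?case using Suc.IH unfolding e1 by blast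
  qed
  show ?thesis
  proof
    fix v assume v: "v \<in> Gamma N"
    obtain x y where xy: "v = (x,y)" by (cases v)
    have b: "0 \<le> x" "x \<le> N-1" "0 \<le> y" "y \<le> N-1" using v xy unfolding Gamma_def by auto
    show "H v = 0"
    proof (cases "N - 1 \<le> x + y")
      case True
      have "Zl H N (N - 1 + int (nat (x + y - (N - 1))))" using up by blast
      thus ?thesis using True b xy unfolding Zl_def by auto
    next
      case False
      have "Zl H N (N - 1 - int (nat (N - 1 - (x + y))))" using down by blast
      thus ?thesis using False b xy unfolding Zl_def by auto
    qed
  qed
qed



definition I0 :: "int \<Rightarrow> (kind \<times> int) set" where
  "I0 N = {(k,i). (k = PlusGe \<and> (i = (if even N then 1 else 0) \<or> (2 \<le> i \<and> i \<le> N-1)))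
     \<or> (k = PlusLe \<and> -(N-1) \<le> i \<and> i \<le> -1) \<or> (k = MinusGe \<and> 1 \<le> i \<and> i \<le> N-1)
     \<or> (k = MinusLe \<and> -(N-1) \<le> i \<and> i \<le> -1)}"

definition pt :: "int \<Rightarrow> kind \<times> int \<Rightarrow> vtx" where
  "pt N = (\<lambda>(k,i). case k of PlusGe \<Rightarrow> if i \<le> 1 then q N 0 else (N-1, i)
      | PlusLe \<Rightarrow> (0, N-1+i) | MinusGe \<Rightarrow> q N i | MinusLe \<Rightarrow> q N i)"

definition rk :: "int \<Rightarrow> kind \<times> int \<Rightarrow> int" where
  "rk N = (\<lambda>(k,i). case k of PlusGe \<Rightarrow> if i \<le> 1 then 0 else 2*N+i
      | MinusGe \<Rightarrow> i | MinusLe \<Rightarrow> N - i | PlusLe \<Rightarrow> 3*N - i)"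

lemma H_PG:
  assumes "is_H N PlusGe i H"
  shows "(\<forall>x y. x + y < i + (N-1) \<longrightarrow> H (x,y) = 0) \<and> (\<forall>x y. x + y = i + (N-1) \<longrightarrow> H (x,y) \<in> {1,-1})"
proof -
  have a: "\<forall>k<i. \<forall>v\<in>dplus (N-1) k. H v = 0" and b: "\<forall>v\<in>dplus (N-1) i. H v \<in> {1,-1}"
    using assms unfolding is_H_def is_H_ge_def by auto
  show ?thesis
  proof (intro conjI allI impI)
    fix x y assume "x + y < i + (N-1)"
    hence lt: "x + y - (N-1) < i" by linarith
    have "(x,y) \<in> dplus (N-1) (x+y-(N-1))" unfolding dplus_def by simp
    thus "H (x,y) = 0" using a lt by blast
  next
    fix x y assume "x + y = i + (N-1)"
    hence "(x,y) \<in> dplus (N-1) i" unfolding dplus_def by simp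
    thus "H (x,y) \<in> {1,-1}" using b by blast
  qed
qed

lemma H_PL:
  assumes "is_H N PlusLe i H"
  shows "(\<forall>x y. x + y > i + (N-1) \<longrightarrow> H (x,y) = 0) \<and> (\<forall>x y. x + y = i + (N-1) \<longrightarrow> H (x,y) \<in> {1,-1})"
proof -
  have a: "\<forall>k>i. \<forall>v\<in>dplus (N-1) k. H v = 0" and b: "\<forall>v\<in>dplus (N-1) i. H v \<in> {1,-1}"
    using assms unfolding is_H_def is_H_le_def by auto
  show ?thesis
  proof (intro conjI allI impI)
    fix x y assume "x + y > i + (N-1)"
    hence lt: "x + y - (N-1) > i" by linarith
    have "(x,y) \<in> dplus (N-1) (x+y-(N-1))" unfolding dplus_def by simp
    thus "H (x,y) = 0" using a lt by blast
  next
    fix x y assume "x + y = i + (N-1)"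
    hence "(x,y) \<in> dplus (N-1) i" unfolding dplus_def by simp
    thus "H (x,y) \<in> {1,-1}" using b by blast
  qed
qed

lemma H_MG: "is_H N MinusGe i H \<Longrightarrow>
   (\<forall>x y. x - y < i \<longrightarrow> H (x,y) = 0) \<and> (\<forall>x y. x - y = i \<longrightarrow> H (x,y) \<in> {1,-1})"
  unfolding is_H_def is_H_ge_def dminus_def by auto

lemma H_ML: "is_H N MinusLe i H \<Longrightarrow>
   (\<forall>x y. x - y > i \<longrightarrow> H (x,y) = 0) \<and> (\<forall>x y. x - y = i \<longrightarrow> H (x,y) \<in> {1,-1})"
  unfolding is_H_def is_H_le_def dminus_def by auto

lemma H_harm: "is_H N k i H \<Longrightarrow> harmonic_Z2 H"
  by (cases k) (auto simp: is_H_def is_H_ge_def is_H_le_def)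

lemma kind_univ: "(UNIV :: kind set) = {PlusGe, PlusLe, MinusGe, MinusLe}"
  using kind.exhaust by auto

lemma I0_finite: "finite (I0 N)"
proof (rule finite_subset)
  show "I0 N \<subseteq> UNIV \<times> {-\<bar>N\<bar>-1..\<bar>N\<bar>+1}" unfolding I0_def by auto
  show "finite (UNIV \<times> {-\<bar>N\<bar>-1..\<bar>N\<bar>+1} :: (kind \<times> int) set)" by (simp add: kind_univ)
qed

lemma PF:
  assumes "(k,i) \<in> I0 N" "pt N (k,i) = (x,y)"
  shows "(k = PlusGe \<and> i \<le> 1 \<and> x - y = 0 \<and> N-1 \<le> x+y \<and> x+y \<le> N \<and> rk N (k,i) = 0)
       \<or> (k = PlusGe \<and> 2 \<le> i \<and> i \<le> N-1 \<and> x = N-1 \<and> y = i \<and> rk N (k,i) = 2*N+i)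
       \<or> (k = PlusLe \<and> -(N-1) \<le> i \<and> i \<le> -1 \<and> x = 0 \<and> y = N-1+i \<and> rk N (k,i) = 3*N-i)
       \<or> (k = MinusGe \<and> 1 \<le> i \<and> i \<le> N-1 \<and> x - y = i \<and> N-1 \<le> x+y \<and> x+y \<le> N \<and> rk N (k,i) = i)
       \<or> (k = MinusLe \<and> -(N-1) \<le> i \<and> i \<le> -1 \<and> x - y = i \<and> N-1 \<le> x+y \<and> x+y \<le> N \<and> rk N (k,i) = N-i)"
proof (cases k)
  case PlusGe
  show ?thesis
  proof (cases "i \<le> 1")
    case True
    hence "q N 0 = (x,y)" using assms PlusGe unfolding pt_def by simp
    thus ?thesis using q_diff[of N 0] q_sum_bounds[of N 0] True PlusGe unfolding rk_def by auto
  next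
    case False
    thus ?thesis using assms PlusGe unfolding pt_def rk_def I0_def by auto
  qed
next
  case PlusLe
  thus ?thesis using assms unfolding pt_def rk_def I0_def by auto
next
  case MinusGe
  hence "q N i = (x,y)" using assms unfolding pt_def by simp
  thus ?thesis using q_diff[of N i] q_sum_bounds[of N i] MinusGe assms(1) unfolding rk_def I0_def by auto
next
  case MinusLe
  hence "q N i = (x,y)" using assms unfolding pt_def by simp
  thus ?thesis using q_diff[of N i] q_sum_bounds[of N i] MinusLe assms(1) unfolding rk_def I0_def by auto
qed

lemma main:
  fixes N :: int and h :: "kind \<Rightarrow> int \<Rightarrow> vtx \<Rightarrow> int"
  assumes N: "N \<ge> 1" and hH: "\<forall>(k, i)\<in>I0 N. is_H N k i (h k i)"
  shows "is_Z_basis (Gamma N) (I0 N) (\<lambda>(k, i). h k i)"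
proof (rule tri_basis[where p = "pt N" and r = "rk N"])
  show "finite (I0 N)" by (rule I0_finite)
  show "inj_on (rk N) (I0 N)"
  proof (rule inj_onI)
    fix j j' assume j: "j \<in> I0 N" and j': "j' \<in> I0 N" and e: "rk N j = rk N j'"
    obtain k i where ki: "j = (k,i)" by (cases j)
    obtain k' i' where ki': "j' = (k',i')" by (cases j')
    obtain x y where xy: "pt N (k,i) = (x,y)" by (cases "pt N (k,i)")
    obtain x' y' where xy': "pt N (k',i') = (x',y')" by (cases "pt N (k',i')")
    have 1: "(k,i) \<in> I0 N" "(k',i') \<in> I0 N" using j j' ki ki' by auto
    have "i = (if even N then 1 else 0)" if "k = PlusGe" "i \<le> 1" using 1(1) that unfolding I0_def by auto
    moreover have "i' = (if even N then 1 else 0)" if "k' = PlusGe" "i' \<le> 1" using 1(2) that unfolding I0_def by auto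
    ultimately show "j = j'" using PF[OF 1(1) xy] PF[OF 1(2) xy'] e ki ki' by auto
  qed
  show "\<forall>j\<in>I0 N. (\<lambda>(k, i). h k i) j \<in> harm_module (Gamma N)"
  proof
    fix j assume j: "j \<in> I0 N"
    obtain k i where ki: "j = (k,i)" by (cases j)
    have "is_H N k i (h k i)" using hH j ki by auto
    hence "h k i \<in> harm_module (Gamma N)" by (rule harmZ2_mod[OF H_harm])
    thus "(\<lambda>(k, i). h k i) j \<in> harm_module (Gamma N)" using ki by simp
  qed
  show "\<forall>j\<in>I0 N. pt N j \<in> Gamma N"
  proof
    fix j assume j: "j \<in> I0 N"
    obtain k i where ki: "j = (k,i)" by (cases j)
    show "pt N j \<in> Gamma N"
    proof (cases k)
      case PlusGe
      thus ?thesis using j ki q_in[OF N, of 0] N unfolding pt_def I0_def Gamma_def by auto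
    next
      case PlusLe
      thus ?thesis using j ki unfolding pt_def I0_def Gamma_def by auto
    next
      case MinusGe
      thus ?thesis using j ki q_in[OF N, of i] unfolding pt_def I0_def by auto
    next
      case MinusLe
      thus ?thesis using j ki q_in[OF N, of i] unfolding pt_def I0_def by auto
    qed
  qed
  show "\<forall>j\<in>I0 N. (\<lambda>(k, i). h k i) j (pt N j) \<in> {1, -1}"
  proof
    fix j assume j: "j \<in> I0 N"
    obtain k i where ki: "j = (k,i)" by (cases j)
    obtain x y where xy: "pt N (k,i) = (x,y)" by (cases "pt N (k,i)")
    have jI: "(k,i) \<in> I0 N" using j ki by simp
    have hk: "is_H N k i (h k i)" using hH jI by auto
    have P: "h k i (x,y) \<in> {1,-1}"
    proof (cases k)
      case PlusGe
      show ?thesis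
      proof (cases "i \<le> 1")
        case True
        hence "q N 0 = (x,y)" using xy PlusGe unfolding pt_def by simp
        moreover have "i = (if even N then 1 else 0)" using True jI PlusGe unfolding I0_def by auto
        ultimately have "x + y = i + (N-1)" using q0_sum[of N] by auto
        thus ?thesis using H_PG[of N i "h k i"] hk PlusGe by auto
      next
        case False
        thus ?thesis using PF[OF jI xy] H_PG[of N i "h k i"] hk PlusGe by auto
      qed
    next
      case PlusLe
      thus ?thesis using PF[OF jI xy] H_PL[of N i "h k i"] hk by auto
    next
      case MinusGe
      thus ?thesis using PF[OF jI xy] H_MG[of N i "h k i"] hk by auto
    next
      case MinusLe
      thus ?thesis using PF[OF jI xy] H_ML[of N i "h k i"] hk by auto
    qed
    thus "(\<lambda>(k, i). h k i) j (pt N j) \<in> {1, -1}" using ki xy by simp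
  qed
  show "\<forall>j\<in>I0 N. \<forall>j'\<in>I0 N. rk N j' < rk N j \<longrightarrow> (\<lambda>(k, i). h k i) j (pt N j') = 0"
  proof (intro ballI impI)
    fix j j' assume j: "j \<in> I0 N" and j': "j' \<in> I0 N" and lt: "rk N j' < rk N j"
    obtain k i where ki: "j = (k,i)" by (cases j)
    obtain k' i' where ki': "j' = (k',i')" by (cases j')
    obtain x y where xy: "pt N (k,i) = (x,y)" by (cases "pt N (k,i)")
    obtain x' y' where xy': "pt N (k',i') = (x',y')" by (cases "pt N (k',i')")
    have 1: "(k,i) \<in> I0 N" "(k',i') \<in> I0 N" using j j' ki ki' by auto
    have hk: "is_H N k i (h k i)" using hH 1 by auto
    have lt': "rk N (k',i') < rk N (k,i)" using lt ki ki' by simp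
    note P = PF[OF 1(1) xy] PF[OF 1(2) xy']
    have "h k i (x',y') = 0"
    proof (cases k)
      case PlusGe
      thus ?thesis using P lt' H_PG[of N i "h k i"] hk by auto
    next
      case PlusLe
      thus ?thesis using P lt' H_PL[of N i "h k i"] hk by auto
    next
      case MinusGe
      thus ?thesis using P lt' H_MG[of N i "h k i"] hk by auto
    next
      case MinusLe
      thus ?thesis using P lt' H_ML[of N i "h k i"] hk by auto
    qed
    thus "(\<lambda>(k, i). h k i) j (pt N j') = 0" using ki ki' xy' by simp
  qed
  show "\<forall>H\<in>harm_module (Gamma N). (\<forall>j\<in>I0 N. H (pt N j) = 0) \<longrightarrow> (\<forall>v\<in>Gamma N. H v = 0)"
  proof (intro ballI impI)
    fix H v assume H: "H \<in> harm_module (Gamma N)" and z: "\<forall>j\<in>I0 N. H (pt N j) = 0"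
      and v: "v \<in> Gamma N"
    have zq: "\<forall>i. -(N-1) \<le> i \<longrightarrow> i \<le> N-1 \<longrightarrow> H (q N i) = 0"
    proof (intro allI impI)
      fix i assume i: "-(N-1) \<le> i" "i \<le> N-1"
      consider "i = 0" | "i \<ge> 1" | "i \<le> -1" by linarith
      thus "H (q N i) = 0"
      proof cases
        case 1
        have "(PlusGe, if even N then 1 else 0) \<in> I0 N" unfolding I0_def by simp
        moreover have "pt N (PlusGe, if even N then 1 else 0) = q N 0" unfolding pt_def by simp
        ultimately show ?thesis using z 1 by force
      next
        case 2
        have "(MinusGe, i) \<in> I0 N" using 2 i unfolding I0_def by simp
        thus ?thesis using z unfolding pt_def by force
      next
        case 3
        have "(MinusLe, i) \<in> I0 N" using 3 i unfolding I0_def by simp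
        thus ?thesis using z unfolding pt_def by force
      qed
    qed
    have zu: "\<forall>i. 2 \<le> i \<longrightarrow> i \<le> N-1 \<longrightarrow> H (N-1, i) = 0"
    proof (intro allI impI)
      fix i assume i: "2 \<le> i" "i \<le> N-1"
      have "(PlusGe, i) \<in> I0 N" using i unfolding I0_def by simp
      thus "H (N-1, i) = 0" using z i unfolding pt_def by force
    qed
    have zd: "\<forall>i. 0 \<le> i \<longrightarrow> i \<le> N-2 \<longrightarrow> H (0, i) = 0"
    proof (intro allI impI)
      fix i assume i: "0 \<le> i" "i \<le> N-2"
      have "(PlusLe, i - (N-1)) \<in> I0 N" using i unfolding I0_def by simp
      thus "H (0, i) = 0" using z i unfolding pt_def by force
    qed
    show "H v = 0" using vanish[OF N H zq zu zd] v by blast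
  qed
qed



lemma idx_one_eq: "idx_one = I0 1"
  unfolding idx_one_def I0_def by auto

lemma idx_even_eq:
  assumes "even N" "N \<ge> 1"
  shows "idx_even N = I0 N"
proof (intro set_eqI iffI)
  fix z assume "z \<in> idx_even N"
  thus "z \<in> I0 N" using assms unfolding idx_even_def I0_def by auto
next
  fix z assume z: "z \<in> I0 N"
  obtain k i where ki: "z = (k,i)" by (cases z)
  have zi: "(k,i) \<in> I0 N" using z ki by simp
  show "z \<in> idx_even N"
  proof (cases k)
    case PlusGe
    have "N \<noteq> 1" using assms(1) by auto
    hence "N \<ge> 2" using assms(2) by simp
    hence r: "1 \<le> i \<and> i \<le> N - 1" using zi assms PlusGe unfolding I0_def by auto
    show ?thesis unfolding idx_even_def ki PlusGe by (rule UN_I[of i]) (use r in auto)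
  next
    case PlusLe
    hence r: "1 \<le> -i \<and> -i \<le> N - 1" using zi unfolding I0_def by auto
    show ?thesis unfolding idx_even_def ki PlusLe by (rule UN_I[of "-i"]) (use r in auto)
  next
    case MinusGe
    hence r: "1 \<le> i \<and> i \<le> N - 1" using zi unfolding I0_def by auto
    show ?thesis unfolding idx_even_def ki MinusGe by (rule UN_I[of i]) (use r in auto)
  next
    case MinusLe
    hence r: "1 \<le> -i \<and> -i \<le> N - 1" using zi unfolding I0_def by auto
    show ?thesis unfolding idx_even_def ki MinusLe by (rule UN_I[of "-i"]) (use r in auto)
  qed
qed

lemma idx_odd_eq:
  assumes "odd N" "N \<ge> 3"
  shows "idx_odd N = I0 N"
proof (intro set_eqI iffI)
  fix z assume "z \<in> idx_odd N"
  thus "z \<in> I0 N" using assms unfolding idx_odd_def I0_def by auto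
next
  fix z assume z: "z \<in> I0 N"
  obtain k i where ki: "z = (k,i)" by (cases z)
  have zi: "(k,i) \<in> I0 N" using z ki by simp
  show "z \<in> idx_odd N"
  proof (cases k)
    case PlusGe
    hence r: "i = 0 \<or> (2 \<le> i \<and> i \<le> N - 1)" using zi assms unfolding I0_def by auto
    show ?thesis
    proof (cases "i = 0")
      case True thus ?thesis unfolding idx_odd_def ki PlusGe by simp
    next
      case False
      hence "2 \<le> i \<and> i \<le> N - 1" using r by simp
      thus ?thesis unfolding idx_odd_def ki PlusGe by (intro UnI2 UN_I[of i]) auto
    qed
  next
    case PlusLe
    hence r: "1 \<le> -i \<and> -i \<le> N - 1" using zi unfolding I0_def by auto
    show ?thesis
    proof (cases "i = -1")
      case True thus ?thesis unfolding idx_odd_def ki PlusLe by simp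
    next
      case False
      hence "2 \<le> -i \<and> -i \<le> N - 1" using r by simp
      thus ?thesis unfolding idx_odd_def ki PlusLe by (intro UnI2 UN_I[of "-i"]) auto
    qed
  next
    case MinusGe
    hence r: "1 \<le> i \<and> i \<le> N - 1" using zi unfolding I0_def by auto
    show ?thesis
    proof (cases "i = 1")
      case True thus ?thesis unfolding idx_odd_def ki MinusGe by simp
    next
      case False
      hence "2 \<le> i \<and> i \<le> N - 1" using r by simp
      thus ?thesis unfolding idx_odd_def ki MinusGe by (intro UnI2 UN_I[of i]) auto
    qed
  next
    case MinusLe
    hence r: "1 \<le> -i \<and> -i \<le> N - 1" using zi unfolding I0_def by auto
    show ?thesis
    proof (cases "i = -1")
      case True thus ?thesis unfolding idx_odd_def ki MinusLe by simp
    next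
      case False
      hence "2 \<le> -i \<and> -i \<le> N - 1" using r by simp
      thus ?thesis unfolding idx_odd_def ki MinusLe by (intro UnI2 UN_I[of "-i"]) auto
    qed
  qed
qed

theorem corollary7:
  fixes N :: int and h :: "kind \<Rightarrow> int \<Rightarrow> vtx \<Rightarrow> int"
  assumes "N \<ge> 1"
  shows "(N = 1 \<longrightarrow> (\<forall>(k, i)\<in>idx_one. is_H N k i (h k i)) \<longrightarrow>
            is_Z_basis (Gamma N) idx_one (\<lambda>(k, i). h k i))
       \<and> (even N \<longrightarrow> (\<forall>(k, i)\<in>idx_even N. is_H N k i (h k i)) \<longrightarrow>
            is_Z_basis (Gamma N) (idx_even N) (\<lambda>(k, i). h k i))
       \<and> (odd N \<and> N \<ge> 3 \<longrightarrow> (\<forall>(k, i)\<in>idx_odd N. is_H N k i (h k i)) \<longrightarrow>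
            is_Z_basis (Gamma N) (idx_odd N) (\<lambda>(k, i). h k i))"
proof (intro conjI impI)
  assume "N = 1" "\<forall>(k, i)\<in>idx_one. is_H N k i (h k i)"
  thus "is_Z_basis (Gamma N) idx_one (\<lambda>(k, i). h k i)"
    using main[of N h] assms unfolding idx_one_eq by simp
next
  assume "even N" "\<forall>(k, i)\<in>idx_even N. is_H N k i (h k i)"
  thus "is_Z_basis (Gamma N) (idx_even N) (\<lambda>(k, i). h k i)"
    using main[of N h] assms unfolding idx_even_eq[OF \<open>even N\<close> assms] by simp
next
  assume a: "odd N \<and> N \<ge> 3" "\<forall>(k, i)\<in>idx_odd N. is_H N k i (h k i)"
  show "is_Z_basis (Gamma N) (idx_odd N) (\<lambda>(k, i). h k i)"
  proof -
    have e: "idx_odd N = I0 N" using a(1) idx_odd_eq by auto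
    show ?thesis using main[of N h] assms a unfolding e by simp
  qed
qed

end
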